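(* Let $b>a\ge0$, $\beta\in(0,1)$, and let $0w1$ be a valid word. Then the function $x\mapsto\lambda(0w1,x)$ is differentiable on $\mathbb{R}_+$ and $$\Big|\frac{d}{dx}\lambda(0w1,x)\Big|\le\frac{1}{(1-\beta)^2}\qquad\text{for all }x\ge0 .$$
   Context: Words are strings over $\{0,1\}$, $w_{1:n}=w_1\cdots w_n$ (with $w_{1:0}$ the empty word), $w^\omega$ the infinite repetition, $|w|$ the length. $\phi_0(x)=\frac{x+1}{ax+a+1}$, $\phi_1(x)=\frac{x+1}{bx+b+1}$ on $\mathbb{R}_+=[0,\infty)$, $\phi_w=\phi_{w_{|w|}}\circ\cdots\circ\phi_{w_1}$ (first letter applied first), $\phi_{\text{empty}}=\mathrm{id}$. For a possibly infinite word $u$, $S(u,x):=\sum_{n=0}^{|u|-1}\beta^n\phi_{u_{1:n}}(x)$, and $$\lambda(0w1,x):=\frac{1-\beta^{|0w1|}}{1-\beta}\Big(S\big((01w)^\omega,x\big)-S\big((10w)^\omega,x\big)\Big).$$ For $p\ge1$, $L_p,R_p$ are the word morphisms determined by $L_p(0)=0^{p+1}1$, $L_p(1)=0^p1$, $R_p(0)=01^p$, $R_p(1)=01^{p+1}$; the valid words form the smallest set of words containing $0,1$ and closed under all $L_p,R_p$. *)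

theory Defs
  imports "HOL-Analysis.Analysis"
begin

text \<open>Words over {0,1} are lists of naturals (letters 0 and 1).\<close>

definition phi :: "real \<Rightarrow> real \<Rightarrow> nat \<Rightarrow> real \<Rightarrow> real" where
  "phi a b c x = (if c = 0 then (x + 1) / (a * x + a + 1) else (x + 1) / (b * x + b + 1))"

fun phiw :: "real \<Rightarrow> real \<Rightarrow> nat list \<Rightarrow> real \<Rightarrow> real" where
  "phiw a b [] x = x"
| "phiw a b (c # w) x = phiw a b w (phi a b c x)"

text \<open>Infinite periodic word v^omega, as a function from positions (0-based) to letters.\<close>
definition omega_word :: "nat list \<Rightarrow> nat \<Rightarrow> nat" where
  "omega_word v i = v ! (i mod length v)"

text \<open>S(u,x) for an infinite word u (0-based positions): sum_n beta^n phi_{u_{1:n}}(x).\<close>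
definition S_inf :: "real \<Rightarrow> real \<Rightarrow> real \<Rightarrow> (nat \<Rightarrow> nat) \<Rightarrow> real \<Rightarrow> real" where
  "S_inf a b \<beta> u x = (\<Sum>n. \<beta> ^ n * phiw a b (map u [0..<n]) x)"

text \<open>lambda(0w1,x), parametrised by the middle part w.\<close>
definition lam :: "real \<Rightarrow> real \<Rightarrow> real \<Rightarrow> nat list \<Rightarrow> real \<Rightarrow> real" where
  "lam a b \<beta> w x = (1 - \<beta> ^ length (0 # w @ [1])) / (1 - \<beta>) *
     (S_inf a b \<beta> (omega_word (0 # 1 # w)) x - S_inf a b \<beta> (omega_word (1 # 0 # w)) x)"

definition Lmor :: "nat \<Rightarrow> nat \<Rightarrow> nat list" where
  "Lmor p c = (if c = 0 then replicate (p + 1) 0 @ [1] else replicate p 0 @ [1])"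

definition Rmor :: "nat \<Rightarrow> nat \<Rightarrow> nat list" where
  "Rmor p c = (if c = 0 then 0 # replicate p 1 else 0 # replicate (p + 1) 1)"

inductive valid :: "nat list \<Rightarrow> bool" where
  valid0: "valid [0]"
| valid1: "valid [1]"
| validL: "valid w \<Longrightarrow> 1 \<le> p \<Longrightarrow> valid (concat (map (Lmor p) w))"
| validR: "valid w \<Longrightarrow> 1 \<le> p \<Longrightarrow> valid (concat (map (Rmor p) w))"

end

theory Submission imports Defs begin

definition dphi :: "real \<Rightarrow> real \<Rightarrow> nat \<Rightarrow> real \<Rightarrow> real" where
  "dphi a b c x = (if c = 0 then 1 / (a * x + a + 1)^2 else 1 / (b * x + b + 1)^2)"

fun dphiw :: "real \<Rightarrow> real \<Rightarrow> nat list \<Rightarrow> real \<Rightarrow> real" where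
  "dphiw a b [] x = 1"
| "dphiw a b (c # w) x = dphi a b c x * dphiw a b w (phi a b c x)"

lemma phi_nonneg: "0 \<le> a \<Longrightarrow> 0 \<le> b \<Longrightarrow> 0 \<le> x \<Longrightarrow> 0 \<le> phi a b c x"
  by (simp add: phi_def)

lemma phi_le: "0 \<le> a \<Longrightarrow> 0 \<le> b \<Longrightarrow> 0 \<le> x \<Longrightarrow> phi a b c x \<le> x + 1"
proof -
  have k: "(x+1) / (d*x+d+1) \<le> x + 1" if "0 \<le> d" "0 \<le> x" for d :: real
  proof -
    have "1 \<le> d*x+d+1" using that by simp
    thus ?thesis using that by (simp add: divide_le_eq)
  qed
  assume "0 \<le> a" "0 \<le> b" "0 \<le> x" thus ?thesis using k by (simp add: phi_def)
qed

lemma phi_deriv: "0 \<le> a \<Longrightarrow> 0 \<le> b \<Longrightarrow> 0 \<le> x \<Longrightarrow> (phi a b c has_real_derivative dphi a b c x) (at x)"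
proof -
  have k: "((\<lambda>x. (x+1) / (d*x+d+1)) has_real_derivative 1 / (d*x+d+1)^2) (at x)" if "0 \<le> d" "0 \<le> x" for d :: real
  proof -
    have "0 \<le> d*x" using that by simp
    hence p: "d*x+d+1 > 0" using that by linarith
    have "((\<lambda>x. (x+1) / (d*x+d+1)) has_real_derivative ((1 * (d*x+d+1) - (x+1) * d) / (d*x+d+1)^2)) (at x)"
      using p by (auto intro!: derivative_eq_intros simp: power2_eq_square)
    moreover have "(1 * (d*x+d+1) - (x+1) * d) = 1" by (simp add: algebra_simps)
    ultimately show ?thesis by metis
  qed
  assume "0 \<le> a" "0 \<le> b" "0 \<le> x"
  thus ?thesis using k[of a] k[of b] unfolding phi_def[abs_def] dphi_def
    by (cases "c = 0") auto
qed

lemma dphi_bounds: "0 \<le> a \<Longrightarrow> 0 \<le> b \<Longrightarrow> 0 \<le> x \<Longrightarrow> 0 \<le> dphi a b c x \<and> dphi a b c x \<le> 1"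
proof -
  have k: "0 \<le> 1 / (d*x+d+1)^2 \<and> 1 / (d*x+d+1)^2 \<le> 1" if "0 \<le> d" "0 \<le> x" for d :: real
  proof -
    have "1 \<le> d*x+d+1" using that by simp
    hence "1 \<le> (d*x+d+1)^2" by (simp add: one_le_power)
    thus ?thesis by (simp add: divide_le_eq_1)
  qed
  assume "0 \<le> a" "0 \<le> b" "0 \<le> x" thus ?thesis using k[of a] k[of b] by (simp add: dphi_def)
qed

lemma phi_lip: "0 \<le> a \<Longrightarrow> 0 \<le> b \<Longrightarrow> 0 \<le> x \<Longrightarrow> x \<le> y \<Longrightarrow>
   0 \<le> phi a b c y - phi a b c x \<and> phi a b c y - phi a b c x \<le> y - x"
proof -
  have k: "0 \<le> (y+1) / (d*y+d+1) - (x+1) / (d*x+d+1) \<and> (y+1) / (d*y+d+1) - (x+1) / (d*x+d+1) \<le> y - x"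
    if "0 \<le> d" "0 \<le> x" "x \<le> y" for d :: real
  proof -
    have p1: "1 \<le> d*x+d+1" "1 \<le> d*y+d+1" using that by (simp_all add: order_trans[OF _ mult_left_mono])
    have e: "(y+1) / (d*y+d+1) - (x+1) / (d*x+d+1) = (y - x) / ((d*y+d+1)*(d*x+d+1))"
      using p1 by (simp add: field_simps)
    have "1 \<le> (d*y+d+1)*(d*x+d+1)" using p1 by (metis mult_mono' mult_1 zero_le_one)
    moreover have "0 \<le> y - x" using that by simp
    ultimately show ?thesis unfolding e by (simp add: divide_le_eq mult_le_cancel_left1 mult_le_cancel_right1)
  qed
  assume "0 \<le> a" "0 \<le> b" "0 \<le> x" "x \<le> y" thus ?thesis using k[of a] k[of b] by (simp add: phi_def)
qed


lemma phiw_props: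
  assumes "0 \<le> a" "0 \<le> b" "0 \<le> x"
  shows "0 \<le> phiw a b w x \<and> phiw a b w x \<le> x + real (length w)
     \<and> (phiw a b w has_real_derivative dphiw a b w x) (at x)
     \<and> 0 \<le> dphiw a b w x \<and> dphiw a b w x \<le> 1"
  using assms(3)
proof (induction w arbitrary: x)
  case Nil then show ?case by simp
next
  case (Cons c w)
  let ?y = "phi a b c x"
  have y0: "0 \<le> ?y" using phi_nonneg assms Cons.prems by blast
  have yl: "?y \<le> x + 1" using phi_le assms Cons.prems by blast
  note IH = Cons.IH[OF y0]
  have d: "(phi a b c has_real_derivative dphi a b c x) (at x)" using phi_deriv assms Cons.prems by blast
  have db: "0 \<le> dphi a b c x \<and> dphi a b c x \<le> 1" using dphi_bounds assms Cons.prems by blast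
  have "((\<lambda>t. phiw a b w (phi a b c t)) has_real_derivative dphiw a b w ?y * dphi a b c x) (at x)"
    using DERIV_chain2[OF conjunct1[OF conjunct2[OF conjunct2[OF IH]]] d] .
  moreover have "phiw a b (c#w) = (\<lambda>t. phiw a b w (phi a b c t))" by (rule ext) simp
  ultimately have der: "(phiw a b (c # w) has_real_derivative dphiw a b (c#w) x) (at x)"
    by (simp add: mult.commute)
  have bnd: "0 \<le> dphiw a b (c#w) x \<and> dphiw a b (c#w) x \<le> 1"
    using IH db by (simp add: mult_le_one)
  show ?case
  proof (intro conjI)
    show "0 \<le> phiw a b (c # w) x" using IH by simp
    show "phiw a b (c # w) x \<le> x + real (length (c # w))" using IH yl by simp
  qed (use der bnd in \<open>simp_all del: phiw.simps dphiw.simps\<close>)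
qed

lemma phiw_lip:
  assumes "0 \<le> a" "0 \<le> b" "0 \<le> x" "x \<le> y"
  shows "0 \<le> phiw a b w y - phiw a b w x \<and> phiw a b w y - phiw a b w x \<le> y - x"
  using assms(3,4)
proof (induction w arbitrary: x y)
  case Nil then show ?case by simp
next
  case (Cons c w)
  have l: "0 \<le> phi a b c y - phi a b c x \<and> phi a b c y - phi a b c x \<le> y - x"
    using phi_lip assms Cons.prems by blast
  have "0 \<le> phi a b c x" using phi_nonneg assms Cons.prems by blast
  with Cons.IH[of "phi a b c x" "phi a b c y"] l show ?case by auto
qed

lemma summable_aux:
  assumes "0 \<le> \<beta>" "\<beta> < 1"
  shows "summable (\<lambda>n. \<beta>^n * (x + real n))"
proof -
  have s1: "summable (\<lambda>n. \<beta>^n * x)" using assms by (intro summable_mult2 summable_geometric) simp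
  have "summable (\<lambda>n. diffs (\<lambda>_. 1::real) n * \<beta> ^ n)"
    by (rule termdiff_converges[of _ 1]) (use assms in \<open>auto intro!: summable_geometric\<close>)
  hence "summable (\<lambda>n. (real n + 1) * \<beta> ^ n)" by (simp add: diffs_def add.commute)
  hence s2: "summable (\<lambda>n. \<beta>^n * real n)"
    by (rule summable_comparison_test'[where N=0]) (use assms in \<open>auto simp: algebra_simps\<close>)
  show ?thesis using summable_add[OF s1 s2] by (simp add: algebra_simps)
qed

lemma S_summable:
  assumes "0 \<le> a" "0 \<le> b" "0 \<le> x" "0 \<le> \<beta>" "\<beta> < 1"
  shows "summable (\<lambda>n. \<beta> ^ n * phiw a b (map u [0..<n]) x)"
proof (rule summable_comparison_test'[OF summable_aux[OF assms(4,5), of x], where N=0])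
  fix n :: nat
  have "0 \<le> phiw a b (map u [0..<n]) x \<and> phiw a b (map u [0..<n]) x \<le> x + real n"
    using phiw_props[OF assms(1-3)] by (metis length_map length_upt minus_nat.diff_0)
  thus "norm (\<beta> ^ n * phiw a b (map u [0..<n]) x) \<le> \<beta>^n * (x + real n)"
    using assms by (simp add: abs_mult mult_left_mono)
qed


lemma S_deriv:
  assumes "0 \<le> a" "0 \<le> b" "0 < \<beta>" "\<beta> < 1" "0 \<le> x"
  shows "\<exists>D. ((\<lambda>t. S_inf a b \<beta> u t) has_real_derivative D) (at x within {0..})"
proof -
  define f where "f n t = \<beta> ^ n * phiw a b (map u [0..<n]) t" for n t
  define f' where "f' n t = \<beta> ^ n * dphiw a b (map u [0..<n]) t" for n t
  have d: "(f n has_field_derivative f' n t) (at t within {0..})" if "t \<in> {0..}" for n t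
  proof -
    have "(phiw a b (map u [0..<n]) has_real_derivative dphiw a b (map u [0..<n]) t) (at t)"
      using phiw_props[OF assms(1,2)] that by auto
    hence "(f n has_field_derivative f' n t) (at t)"
      unfolding f_def[abs_def] f'_def by (auto intro!: derivative_eq_intros)
    thus ?thesis by (rule has_field_derivative_at_within)
  qed
  have u: "uniform_limit {0..} (\<lambda>n t. \<Sum>i<n. f' i t) (\<lambda>t. suminf (\<lambda>i. f' i t)) sequentially"
  proof (rule Weierstrass_m_test[where M="\<lambda>n. \<beta>^n"])
    fix n and t :: real assume "t \<in> {0..}"
    hence "0 \<le> dphiw a b (map u [0..<n]) t \<and> dphiw a b (map u [0..<n]) t \<le> 1"
      using phiw_props[OF assms(1,2)] by auto
    thus "norm (f' n t) \<le> \<beta>^n" using assms unfolding f'_def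
      by (simp add: abs_mult mult_left_le)
  next
    show "summable (\<lambda>n. \<beta>^n)" using assms by (simp add: summable_geometric)
  qed
  have s0: "summable (\<lambda>n. f n 0)" unfolding f_def using S_summable[of a b 0 \<beta> u] assms by simp
  obtain g where g: "\<forall>t\<in>{0..}. (\<lambda>n. f n t) sums g t \<and> (g has_field_derivative (\<lambda>t. suminf (\<lambda>i. f' i t)) t) (at t within {0..})"
    using has_field_derivative_series[OF convex_real_interval(1) d u _ s0] by auto
  have "((\<lambda>t. S_inf a b \<beta> u t) has_real_derivative (suminf (\<lambda>i. f' i x))) (at x within {0..})"
  proof (rule has_field_derivative_transform_within[where d=1])
    show "(g has_real_derivative (suminf (\<lambda>i. f' i x))) (at x within {0..})" using g assms by auto
    fix t :: real assume "t \<in> {0..}"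
    thus "g t = S_inf a b \<beta> u t" using g unfolding S_inf_def f_def by (metis sums_unique)
  qed (use assms in auto)
  thus ?thesis by blast
qed


lemma S_diff_lip:
  assumes "0 \<le> a" "0 \<le> b" "0 < \<beta>" "\<beta> < 1" "0 \<le> x" "x \<le> y"
  shows "\<bar>(S_inf a b \<beta> u y - S_inf a b \<beta> v y) - (S_inf a b \<beta> u x - S_inf a b \<beta> v x)\<bar> \<le> (y - x) / (1 - \<beta>)"
proof -
  define P where "P z t n = \<beta> ^ n * phiw a b (map z [0..<n]) t" for z t n
  have sm: "(P z t) sums S_inf a b \<beta> z t" if "0 \<le> t" for z t
    unfolding P_def S_inf_def using S_summable[of a b t \<beta> z] assms that by (simp add: summable_sums)
  define h where "h n = (P u y n - P v y n) - (P u x n - P v x n)" for n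
  have hs: "h sums ((S_inf a b \<beta> u y - S_inf a b \<beta> v y) - (S_inf a b \<beta> u x - S_inf a b \<beta> v x))"
    unfolding h_def[abs_def] using assms
    by (intro sums_diff sm) auto
  have gs: "(\<lambda>n. \<beta>^n * (y - x)) sums ((y - x) / (1 - \<beta>))"
    using sums_mult2[OF geometric_sums[of \<beta>], of "y - x"] assms by simp
  have hb: "\<bar>h n\<bar> \<le> \<beta>^n * (y - x)" for n
  proof -
    have l1: "0 \<le> phiw a b (map u [0..<n]) y - phiw a b (map u [0..<n]) x \<and> phiw a b (map u [0..<n]) y - phiw a b (map u [0..<n]) x \<le> y - x"
      using phiw_lip assms by blast
    have l2: "0 \<le> phiw a b (map v [0..<n]) y - phiw a b (map v [0..<n]) x \<and> phiw a b (map v [0..<n]) y - phiw a b (map v [0..<n]) x \<le> y - x"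
      using phiw_lip assms by blast
    have e: "h n = \<beta>^n * ((phiw a b (map u [0..<n]) y - phiw a b (map u [0..<n]) x) - (phiw a b (map v [0..<n]) y - phiw a b (map v [0..<n]) x))"
      unfolding h_def P_def by (simp add: algebra_simps)
    have "\<bar>(phiw a b (map u [0..<n]) y - phiw a b (map u [0..<n]) x) - (phiw a b (map v [0..<n]) y - phiw a b (map v [0..<n]) x)\<bar> \<le> y - x"
      using l1 l2 by linarith
    thus ?thesis unfolding e using assms by (simp add: abs_mult mult_left_mono)
  qed
  have hb1: "h n \<le> \<beta>^n * (y - x)" for n using hb[of n] by linarith
  have hb2: "- (\<beta>^n * (y - x)) \<le> h n" for n using hb[of n] by linarith
  have up: "((S_inf a b \<beta> u y - S_inf a b \<beta> v y) - (S_inf a b \<beta> u x - S_inf a b \<beta> v x)) \<le> (y - x) / (1 - \<beta>)"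
    by (rule sums_le[OF _ hs gs]) (rule hb1)
  have lo: "- ((y - x) / (1 - \<beta>)) \<le> ((S_inf a b \<beta> u y - S_inf a b \<beta> v y) - (S_inf a b \<beta> u x - S_inf a b \<beta> v x))"
    by (rule sums_le[OF _ sums_minus[OF gs] hs]) (rule hb2)
  show ?thesis using up lo by linarith
qed

lemma lam_lip:
  assumes "0 \<le> a" "0 \<le> b" "0 < \<beta>" "\<beta> < 1" "0 \<le> x" "0 \<le> y"
  shows "\<bar>lam a b \<beta> w y - lam a b \<beta> w x\<bar> \<le> \<bar>y - x\<bar> / (1 - \<beta>)^2"
proof -
  define C where "C = (1 - \<beta> ^ length (0 # w @ [1])) / (1 - \<beta>)"
  have "\<beta> ^ length (0 # w @ [1]) \<le> 1" using assms by (intro power_le_one) auto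
  hence C0: "0 \<le> C" unfolding C_def using assms by (intro divide_nonneg_pos) auto
  have C1: "C \<le> 1 / (1 - \<beta>)" unfolding C_def using assms by (simp add: divide_right_mono)
  define E where "E t = S_inf a b \<beta> (omega_word (0 # 1 # w)) t - S_inf a b \<beta> (omega_word (1 # 0 # w)) t" for t
  have lamE: "lam a b \<beta> w t = C * E t" for t unfolding lam_def C_def E_def by simp
  have Eb: "\<bar>E y - E x\<bar> \<le> \<bar>y - x\<bar> / (1 - \<beta>)"
  proof (cases "x \<le> y")
    case True thus ?thesis using S_diff_lip[OF assms(1-5) True] unfolding E_def by simp
  next
    case False
    hence "\<bar>E x - E y\<bar> \<le> (x - y) / (1 - \<beta>)" using S_diff_lip[OF assms(1-4,6), of x] unfolding E_def by simp
    thus ?thesis using False by (simp add: abs_minus_commute)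
  qed
  have "\<bar>lam a b \<beta> w y - lam a b \<beta> w x\<bar> = C * \<bar>E y - E x\<bar>"
    unfolding lamE using C0 by (simp add: abs_mult right_diff_distrib[symmetric])
  also have "\<dots> \<le> (1 / (1 - \<beta>)) * (\<bar>y - x\<bar> / (1 - \<beta>))"
    using C0 C1 Eb assms by (intro mult_mono) auto
  also have "\<dots> = \<bar>y - x\<bar> / (1 - \<beta>)^2" by (simp add: power2_eq_square)
  finally show ?thesis .
qed


lemma islimpt_nonneg: "0 \<le> (x::real) \<Longrightarrow> x islimpt {0..}"
  unfolding islimpt_approachable
proof (intro allI impI)
  fix e :: real assume "0 \<le> x" "0 < e"
  thus "\<exists>y\<in>{0..}. y \<noteq> x \<and> dist y x < e"
    by (intro bexI[of _ "x + e/2"]) (auto simp: dist_real_def)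
qed

theorem mainTheorem14:
  fixes a b \<beta> :: real and w :: "nat list"
  assumes "0 \<le> a" and "a < b" and "0 < \<beta>" and "\<beta> < 1"
    and "valid (0 # w @ [1])"
  shows "(\<forall>x::real. 0 \<le> x \<longrightarrow> (\<exists>D. ((\<lambda>t. lam a b \<beta> w t) has_real_derivative D) (at x within {0..})))
       \<and> (\<forall>x D. 0 \<le> x \<longrightarrow> ((\<lambda>t. lam a b \<beta> w t) has_real_derivative D) (at x within {0..})
              \<longrightarrow> \<bar>D\<bar> \<le> 1 / (1 - \<beta>)^2)"
proof (intro conjI allI impI)
  have b0: "0 \<le> b" using assms by simp
  fix x :: real assume x: "0 \<le> x"
  obtain D1 where D1: "((\<lambda>t. S_inf a b \<beta> (omega_word (0 # 1 # w)) t) has_real_derivative D1) (at x within {0..})"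
    using S_deriv[OF assms(1) b0 assms(3,4) x] by blast
  obtain D2 where D2: "((\<lambda>t. S_inf a b \<beta> (omega_word (1 # 0 # w)) t) has_real_derivative D2) (at x within {0..})"
    using S_deriv[OF assms(1) b0 assms(3,4) x] by blast
  show "\<exists>D. ((\<lambda>t. lam a b \<beta> w t) has_real_derivative D) (at x within {0..})"
    unfolding lam_def using DERIV_cmult[OF DERIV_diff[OF D1 D2]] by blast
next
  have b0: "0 \<le> b" using assms by simp
  fix x D :: real assume x: "0 \<le> x" and d: "((\<lambda>t. lam a b \<beta> w t) has_real_derivative D) (at x within {0..})"
  let ?q = "\<lambda>y. (lam a b \<beta> w y - lam a b \<beta> w x) / (y - x)"
  have "(?q \<longlongrightarrow> D) (at x within {0..})" using d by (simp add: has_field_derivative_iff)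
  hence t: "((\<lambda>y. \<bar>?q y\<bar>) \<longlongrightarrow> \<bar>D\<bar>) (at x within {0..})" by (rule tendsto_rabs)
  have ev: "eventually (\<lambda>y. \<bar>?q y\<bar> \<le> 1 / (1 - \<beta>)^2) (at x within {0..})"
    unfolding eventually_at_filter
  proof (rule always_eventually, intro allI impI)
    fix y :: real assume "y \<noteq> x" "y \<in> {0..}"
    hence y: "0 \<le> y" "\<bar>y - x\<bar> > 0" by auto
    have "\<bar>lam a b \<beta> w y - lam a b \<beta> w x\<bar> \<le> \<bar>y - x\<bar> / (1 - \<beta>)^2"
      using lam_lip[OF assms(1) b0 assms(3,4) x y(1)] .
    hence "\<bar>lam a b \<beta> w y - lam a b \<beta> w x\<bar> / \<bar>y - x\<bar> \<le> 1 / (1 - \<beta>)^2"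
      using y by (simp add: divide_le_eq field_simps)
    thus "\<bar>?q y\<bar> \<le> 1 / (1 - \<beta>)^2" by (simp add: abs_divide)
  qed
  have nt: "\<not> trivial_limit (at x within {0..})"
    using islimpt_nonneg[OF x] by (simp add: trivial_limit_within)
  show "\<bar>D\<bar> \<le> 1 / (1 - \<beta>)^2" by (rule tendsto_upperbound[OF t ev nt])
qed

end
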